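(* Let $k \ge 2$ be an integer. There is a constant $C_k>0$ depending only on $k$ such that for all real numbers $x \ge 1$ and all real $y$ with $1 \le y \le x$, \[ Q_k(x+y) - Q_k(x) \le C_k\, \frac{y}{\log(y+1)}. \]
   Context: A positive integer $n$ is $k$-full if every prime $p$ dividing $n$ satisfies $p^k \mid n$ (i.e. every exponent in its prime factorization is at least $k$); $2$-full numbers are called squarefull. $Q_k(x)$ denotes the number of $k$-full positive integers $n \le x$. *)

theory Defs
  imports "HOL-Analysis.Analysis" "HOL-Computational_Algebra.Primes"
begin

definition k_full :: "nat \<Rightarrow> nat \<Rightarrow> bool" where
  "k_full k n \<longleftrightarrow> n > 0 \<and> (\<forall>p. prime p \<and> p dvd n \<longrightarrow> p ^ k dvd n)"

definition Q :: "nat \<Rightarrow> real \<Rightarrow> nat" where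
  "Q k x = card {n::nat. n \<ge> 1 \<and> real n \<le> x \<and> k_full k n}"

end

theory Submission
  imports Defs "HOL-Number_Theory.Number_Theory" "HOL-Computational_Algebra.Squarefree"
begin


lemma alt_sum:
  assumes "finite A"
  shows "(\<Sum>X\<in>Pow A. (-1::real) ^ card (A - X)) = (if A = {} then 1 else 0)"
proof -
  have "(\<Prod>x\<in>A. (1::real) + (-1)) = (\<Sum>X\<in>Pow A. (\<Prod>x\<in>X. 1) * (\<Prod>x\<in>A - X. -1))"
    by (rule prod_add[OF assms])
  moreover have "(\<Prod>x\<in>A. (1::real) + (-1)) = (if A = {} then 1 else 0)"
    using assms by auto
  ultimately show ?thesis by simp
qed

lemma mobius_inv:
  fixes D :: "'a set set" and y :: "'a set \<Rightarrow> real"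
  assumes finD: "finite D" and down: "\<And>V S. V \<in> D \<Longrightarrow> S \<subseteq> V \<Longrightarrow> S \<in> D"
    and fin: "\<And>V. V \<in> D \<Longrightarrow> finite V" and T: "T \<in> D"
  shows "(\<Sum>S\<in>{S\<in>D. T \<subseteq> S}. \<Sum>V\<in>{V\<in>D. S \<subseteq> V}. (-1)^card (V - S) * y V) = y T"
proof -
  have "(\<Sum>S\<in>{S\<in>D. T \<subseteq> S}. \<Sum>V\<in>{V\<in>D. S \<subseteq> V}. (-1)^card (V - S) * y V)
      = (\<Sum>V\<in>D. \<Sum>S\<in>{S\<in>{S\<in>D. T \<subseteq> S}. S \<subseteq> V}. (-1)^card (V - S) * y V)"
    by (rule sum.swap_restrict) (use finD in auto)
  also have "\<dots> = (\<Sum>V\<in>D. if V = T then y V else 0)"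
  proof (rule sum.cong[OF refl])
    fix V assume V: "V \<in> D"
    show "(\<Sum>S\<in>{S\<in>{S\<in>D. T \<subseteq> S}. S \<subseteq> V}. (-1)^card (V - S) * y V) = (if V = T then y V else 0)"
    proof (cases "T \<subseteq> V")
      case False
      then have e: "{S\<in>{S\<in>D. T \<subseteq> S}. S \<subseteq> V} = {}" by auto
      have "V \<noteq> T" using False by auto
      then show ?thesis unfolding e by simp
    next
      case True
      have set: "{S\<in>{S\<in>D. T \<subseteq> S}. S \<subseteq> V} = (\<lambda>X. T \<union> X) ` Pow (V - T)"
      proof (rule equalityI; rule subsetI)
        fix S assume "S \<in> {S\<in>{S\<in>D. T \<subseteq> S}. S \<subseteq> V}"
        then have "T \<subseteq> S" "S \<subseteq> V" by auto
        then show "S \<in> (\<lambda>X. T \<union> X) ` Pow (V - T)" by (intro image_eqI[of _ _ "S - T"]) auto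
      next
        fix S assume "S \<in> (\<lambda>X. T \<union> X) ` Pow (V - T)"
        then obtain X where X: "X \<subseteq> V - T" "S = T \<union> X" by auto
        then have "S \<subseteq> V" using True by auto
        then show "S \<in> {S\<in>{S\<in>D. T \<subseteq> S}. S \<subseteq> V}" using down[OF V \<open>S \<subseteq> V\<close>] X by auto
      qed
      have inj: "inj_on (\<lambda>X. T \<union> X) (Pow (V - T))"
        by (rule inj_onI) auto
      have "(\<Sum>S\<in>{S\<in>{S\<in>D. T \<subseteq> S}. S \<subseteq> V}. (-1)^card (V - S) * y V)
          = (\<Sum>X\<in>Pow (V - T). (-1)^card (V - (T \<union> X)) * y V)"
        unfolding set by (subst sum.reindex[OF inj]) simp
      also have "\<dots> = (\<Sum>X\<in>Pow (V - T). (-1)^card ((V - T) - X)) * y V"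
        by (simp add: sum_distrib_right Diff_Un Diff_Int_distrib2 set_diff_eq) 
      also have "\<dots> = (if V - T = {} then 1 else 0) * y V"
        using fin[OF V] by (subst alt_sum) auto
      finally show ?thesis using True by auto
    qed
  qed
  also have "\<dots> = y T" using T finD by (simp add: sum.delta')
  finally show ?thesis .
qed



lemma quad_expand:
  fixes D :: "'a set set" and a F :: "'a set \<Rightarrow> real"
  assumes finD: "finite D"
  shows "(\<Sum>S1\<in>D. \<Sum>S2\<in>D. a S1 * a S2 * (\<Sum>T\<in>{T\<in>D. T \<subseteq> S1 \<and> T \<subseteq> S2}. F T))
       = (\<Sum>T\<in>D. F T * (\<Sum>S\<in>{S\<in>D. T \<subseteq> S}. a S)^2)"
proof -
  define c where "c T S1 S2 = (if T \<subseteq> S1 \<and> T \<subseteq> S2 then a S1 * a S2 * F T else 0)" for T S1 S2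
  have L: "(\<Sum>S1\<in>D. \<Sum>S2\<in>D. a S1 * a S2 * (\<Sum>T\<in>{T\<in>D. T \<subseteq> S1 \<and> T \<subseteq> S2}. F T))
        = (\<Sum>S1\<in>D. \<Sum>S2\<in>D. \<Sum>T\<in>D. c T S1 S2)"
    by (simp add: sum.inter_filter[OF finD] sum_distrib_left c_def if_distrib cong: if_cong)
  have R: "(\<Sum>T\<in>D. F T * (\<Sum>S\<in>{S\<in>D. T \<subseteq> S}. a S)^2) = (\<Sum>T\<in>D. \<Sum>S1\<in>D. \<Sum>S2\<in>D. c T S1 S2)"
  proof (rule sum.cong[OF refl])
    fix T assume "T \<in> D"
    have "(\<Sum>S\<in>{S\<in>D. T \<subseteq> S}. a S) = (\<Sum>S\<in>D. if T \<subseteq> S then a S else 0)"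
      by (rule sum.inter_filter[OF finD])
    then have "F T * (\<Sum>S\<in>{S\<in>D. T \<subseteq> S}. a S)^2
       = F T * ((\<Sum>S1\<in>D. if T \<subseteq> S1 then a S1 else 0) * (\<Sum>S2\<in>D. if T \<subseteq> S2 then a S2 else 0))"
      by (simp add: power2_eq_square)
    also have "\<dots> = (\<Sum>S1\<in>D. \<Sum>S2\<in>D. c T S1 S2)"
    proof -
      have "(\<Sum>S1\<in>D. if T \<subseteq> S1 then a S1 else 0) * (\<Sum>S2\<in>D. if T \<subseteq> S2 then a S2 else 0)
          = (\<Sum>S1\<in>D. \<Sum>S2\<in>D. (if T \<subseteq> S1 then a S1 else 0) * (if T \<subseteq> S2 then a S2 else 0))"
        by (rule sum_product)
      then have "F T * ((\<Sum>S1\<in>D. if T \<subseteq> S1 then a S1 else 0) * (\<Sum>S2\<in>D. if T \<subseteq> S2 then a S2 else 0))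
          = F T * (\<Sum>S1\<in>D. \<Sum>S2\<in>D. (if T \<subseteq> S1 then a S1 else 0) * (if T \<subseteq> S2 then a S2 else 0))"
        by simp
      also have "\<dots> = (\<Sum>S1\<in>D. \<Sum>S2\<in>D. c T S1 S2)"
        unfolding sum_distrib_left c_def by (intro sum.cong refl) auto
      finally show ?thesis .
    qed
    finally show "F T * (\<Sum>S\<in>{S\<in>D. T \<subseteq> S}. a S)^2 = (\<Sum>S1\<in>D. \<Sum>S2\<in>D. c T S1 S2)" .
  qed
  have "(\<Sum>S1\<in>D. \<Sum>S2\<in>D. \<Sum>T\<in>D. c T S1 S2) = (\<Sum>S1\<in>D. \<Sum>T\<in>D. \<Sum>S2\<in>D. c T S1 S2)"
    by (rule sum.cong[OF refl], rule sum.swap)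
  also have "\<dots> = (\<Sum>T\<in>D. \<Sum>S1\<in>D. \<Sum>S2\<in>D. c T S1 S2)"
    by (rule sum.swap)
  finally show ?thesis using L R by simp
qed



lemma selberg_weights:
  fixes D :: "nat set set" and gp :: "nat \<Rightarrow> real"
  assumes finD: "finite D" and down: "\<And>V S. V \<in> D \<Longrightarrow> S \<subseteq> V \<Longrightarrow> S \<in> D"
    and fin: "\<And>V. V \<in> D \<Longrightarrow> finite V" and emp: "{} \<in> D"
    and gp: "\<And>V p. V \<in> D \<Longrightarrow> p \<in> V \<Longrightarrow> 0 < gp p \<and> gp p < 1"
  defines "g \<equiv> (\<lambda>S. \<Prod>p\<in>S. gp p)"
  defines "G \<equiv> (\<Sum>T\<in>D. \<Prod>p\<in>T. 1 / (1 / gp p - 1))"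
  shows "G \<ge> 1 \<and> (\<exists>lam. lam {} = 1 \<and> (\<forall>S\<in>D. \<bar>lam S\<bar> \<le> 1 / g S) \<and>
           (\<Sum>S1\<in>D. \<Sum>S2\<in>D. lam S1 * lam S2 * g (S1 \<union> S2)) = 1 / G)"
proof -
  define F1 where "F1 S = (\<Prod>p\<in>S. 1 / gp p - 1)" for S
  define H where "H S = (\<Prod>p\<in>S. 1 / (1 / gp p - 1))" for S
  have GH: "G = (\<Sum>T\<in>D. H T)" unfolding G_def H_def ..
  have Hnn: "H T \<ge> 0" if "T \<in> D" for T
    unfolding H_def
  proof (intro prod_nonneg)
    fix p assume "p \<in> T"
    with gp[OF that] have "0 < gp p" "gp p < 1" by auto
    then have "1 / gp p > 1" by (simp add: field_simps)
    then show "0 \<le> 1 / (1 / gp p - 1)" by simp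
  qed
  have F1H: "F1 T * H T = 1" if "T \<in> D" for T
  proof -
    have "F1 T * H T = (\<Prod>p\<in>T. (1 / gp p - 1) * (1 / (1 / gp p - 1)))"
      unfolding F1_def H_def by (rule prod.distrib[symmetric])
    also have "\<dots> = (\<Prod>p\<in>T. 1)"
    proof (rule prod.cong[OF refl])
      fix p assume "p \<in> T"
      with gp[OF that] have "0 < gp p" "gp p < 1" by auto
      then have "1 / gp p > 1" by (simp add: field_simps)
      then have "1 / gp p - 1 \<noteq> 0" by linarith
      then show "(1 / gp p - 1) * (1 / (1 / gp p - 1)) = 1" by simp
    qed
    finally show ?thesis by simp
  qed
  have G1: "G \<ge> 1"
  proof -
    have "H {} \<le> (\<Sum>T\<in>D. H T)" by (rule member_le_sum[OF emp]) (use Hnn finD in auto)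
    then show ?thesis unfolding GH H_def by simp
  qed
  have gpos: "g S > 0" if "S \<in> D" for S
    unfolding g_def using gp[OF that] by (intro prod_pos) auto
  define yv where "yv T = (-1)^card T * H T / G" for T
  define lam where "lam S = (\<Sum>V\<in>{V\<in>D. S \<subseteq> V}. (-1)^card (V - S) * yv V) / g S" for S
  have lamg: "lam S * g S = (\<Sum>V\<in>{V\<in>D. S \<subseteq> V}. (-1)^card (V - S) * yv V)" if "S \<in> D" for S
    unfolding lam_def using gpos[OF that] by simp
  have lam0: "lam {} = 1"
  proof -
    have "lam {} = (\<Sum>V\<in>D. (-1)^card V * yv V)" unfolding lam_def g_def by simp
    also have "\<dots> = (\<Sum>V\<in>D. H V / G)"
      unfolding yv_def by (intro sum.cong refl) (simp add: power_mult_distrib[symmetric] flip: power_add)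
    also have "\<dots> = 1" using G1 by (simp add: GH sum_divide_distrib[symmetric])
    finally show ?thesis .
  qed
  have lambd: "\<bar>lam S\<bar> \<le> 1 / g S" if "S \<in> D" for S
  proof -
    have "\<bar>\<Sum>V\<in>{V\<in>D. S \<subseteq> V}. (-1)^card (V - S) * yv V\<bar> \<le> (\<Sum>V\<in>{V\<in>D. S \<subseteq> V}. \<bar>(-1)^card (V - S) * yv V\<bar>)"
      by (rule sum_abs)
    also have "\<dots> = (\<Sum>V\<in>{V\<in>D. S \<subseteq> V}. H V / G)"
      unfolding yv_def using Hnn G1 by (intro sum.cong refl) (auto simp: abs_mult)
    also have "\<dots> \<le> (\<Sum>V\<in>D. H V / G)"
      by (rule sum_mono2) (use finD Hnn G1 in auto)
    also have "\<dots> = 1" using G1 by (simp add: GH sum_divide_distrib[symmetric])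
    finally have "\<bar>lam S * g S\<bar> \<le> 1" using lamg[OF that] by simp
    then show ?thesis using gpos[OF that] by (simp add: abs_mult field_simps)
  qed
  have gU: "g (S1 \<union> S2) = g S1 * g S2 * (\<Sum>T\<in>{T\<in>D. T \<subseteq> S1 \<and> T \<subseteq> S2}. F1 T)"
    if S1: "S1 \<in> D" and S2: "S2 \<in> D" for S1 S2
  proof -
    have I: "S1 \<inter> S2 \<in> D" using down[OF S1] by auto
    have "{T\<in>D. T \<subseteq> S1 \<and> T \<subseteq> S2} = Pow (S1 \<inter> S2)" using down[OF I] by auto
    then have "(\<Sum>T\<in>{T\<in>D. T \<subseteq> S1 \<and> T \<subseteq> S2}. F1 T) = (\<Sum>T\<in>Pow (S1 \<inter> S2). F1 T)" by simp
    also have "\<dots> = (\<Prod>p\<in>S1 \<inter> S2. (1 / gp p - 1) + 1)"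
      unfolding F1_def using prod_add[of "S1 \<inter> S2" "\<lambda>p. 1 / gp p - 1" "\<lambda>_. 1"] fin[OF I] by simp
    also have "\<dots> = 1 / g (S1 \<inter> S2)" unfolding g_def by (simp add: prod_dividef)
    finally have e: "(\<Sum>T\<in>{T\<in>D. T \<subseteq> S1 \<and> T \<subseteq> S2}. F1 T) = 1 / g (S1 \<inter> S2)" .
    have "g (S1 \<union> S2) * g (S1 \<inter> S2) = g S1 * g S2"
      unfolding g_def by (rule prod.union_inter) (use fin S1 S2 in auto)
    then show ?thesis unfolding e using gpos[OF I] by (simp add: field_simps)
  qed
  have "(\<Sum>S1\<in>D. \<Sum>S2\<in>D. lam S1 * lam S2 * g (S1 \<union> S2))
      = (\<Sum>S1\<in>D. \<Sum>S2\<in>D. (lam S1 * g S1) * (lam S2 * g S2) * (\<Sum>T\<in>{T\<in>D. T \<subseteq> S1 \<and> T \<subseteq> S2}. F1 T))"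
    by (intro sum.cong refl) (simp add: gU mult_ac)
  also have "\<dots> = (\<Sum>T\<in>D. F1 T * (\<Sum>S\<in>{S\<in>D. T \<subseteq> S}. lam S * g S)^2)"
    by (rule quad_expand[OF finD])
  also have "\<dots> = (\<Sum>T\<in>D. F1 T * (yv T)^2)"
  proof (rule sum.cong[OF refl])
    fix T assume T: "T \<in> D"
    have "(\<Sum>S\<in>{S\<in>D. T \<subseteq> S}. lam S * g S) = (\<Sum>S\<in>{S\<in>D. T \<subseteq> S}. \<Sum>V\<in>{V\<in>D. S \<subseteq> V}. (-1)^card (V - S) * yv V)"
      by (intro sum.cong refl lamg) auto
    also have "\<dots> = yv T" by (rule mobius_inv[OF finD down fin T])
    finally show "F1 T * (\<Sum>S\<in>{S\<in>D. T \<subseteq> S}. lam S * g S)^2 = F1 T * (yv T)^2" by simp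
  qed
  also have "\<dots> = (\<Sum>T\<in>D. H T / G^2)"
  proof (rule sum.cong[OF refl])
    fix T assume T: "T \<in> D"
    have "F1 T * (yv T)^2 = (F1 T * H T) * H T / G^2"
      unfolding yv_def by (simp add: power_mult_distrib power_divide power2_eq_square flip: power_mult)
    then show "F1 T * (yv T)^2 = H T / G^2" using F1H[OF T] by simp
  qed
  also have "\<dots> = 1 / G" using G1 by (simp add: GH sum_divide_distrib[symmetric] power2_eq_square)
  finally show ?thesis using G1 lam0 lambd by blast
qed



definition sifts :: "nat set \<Rightarrow> nat \<Rightarrow> bool" where
  "sifts S n \<longleftrightarrow> (\<forall>p\<in>S. p dvd n \<and> \<not> p^2 dvd n)"

lemma prod_primes_dvd:
  assumes "finite S" "\<forall>p\<in>S. prime (p::nat)" "\<forall>p\<in>S. p dvd n"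
  shows "\<Prod>S dvd n"
  using assms
proof (induction S rule: finite_induct)
  case empty then show ?case by simp
next
  case (insert p S)
  have "\<not> p dvd \<Prod>S"
  proof
    assume "p dvd \<Prod>S"
    then obtain q where "q \<in> S" "p dvd q" using insert prime_dvd_prod_iff[of S p id] by auto
    then have "p = q" using insert by (simp add: primes_dvd_imp_eq)
    then show False using insert \<open>q \<in> S\<close> by auto
  qed
  then have "coprime p (\<Prod>S)" using insert by (simp add: prime_imp_coprime)
  then show ?case using insert by (simp add: divides_mult)
qed

lemma prime_dvd_prod_primes:
  assumes "finite S" "\<forall>p\<in>S. prime (p::nat)" "prime q" "q dvd \<Prod>S"
  shows "q \<in> S"
proof -
  obtain p where "p \<in> S" "q dvd p" using assms prime_dvd_prod_iff[of S q id] by auto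
  then show ?thesis using assms by (metis primes_dvd_imp_eq)
qed

lemma sifts_iff:
  assumes fin: "finite S" and pr: "\<forall>p\<in>S. prime (p::nat)"
  shows "sifts S n \<longleftrightarrow> (\<Prod>S dvd n \<and> coprime (n div \<Prod>S) (\<Prod>S))"
proof
  assume s: "sifts S n"
  have d: "\<Prod>S dvd n" using prod_primes_dvd[OF fin pr] s unfolding sifts_def by auto
  then obtain m where m: "n = \<Prod>S * m" by auto
  have "\<Prod>S > 0" using pr by (simp add: prime_gt_0_nat prod_pos)
  then have md: "n div \<Prod>S = m" using m by simp
  have "coprime m (\<Prod>S)"
  proof (rule ccontr)
    assume "\<not> coprime m (\<Prod>S)"
    then have "gcd m (\<Prod>S) \<noteq> 1" using coprime_iff_gcd_eq_1 by blast
    then obtain q where q0: "prime q" "q dvd gcd m (\<Prod>S)" using prime_factor_nat by blast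
    then have q: "prime q" "q dvd m" "q dvd \<Prod>S" using dvd_trans gcd_dvd1 gcd_dvd2 by blast+
    have "q \<in> S" using prime_dvd_prod_primes[OF fin pr q(1) q(3)] .
    moreover have "q^2 dvd n" using q m by (simp add: power2_eq_square mult_dvd_mono)
    ultimately show False using s unfolding sifts_def by auto
  qed
  then show "\<Prod>S dvd n \<and> coprime (n div \<Prod>S) (\<Prod>S)" using d md by simp
next
  assume a: "\<Prod>S dvd n \<and> coprime (n div \<Prod>S) (\<Prod>S)"
  then obtain m where m: "n = \<Prod>S * m" by auto
  have "\<Prod>S > 0" using pr by (simp add: prime_gt_0_nat prod_pos)
  then have cop: "coprime m (\<Prod>S)" using a m by simp
  show "sifts S n" unfolding sifts_def
  proof
    fix p assume p: "p \<in> S"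
    have pd: "p dvd \<Prod>S" using dvd_prodI[OF fin p, of "\<lambda>x. x"] by simp
    have "p dvd n" using pd a dvd_trans by blast
    moreover have "\<not> p^2 dvd n"
    proof
      assume "p^2 dvd n"
      have S': "\<Prod>S = p * \<Prod>(S - {p})" using p fin by (simp add: prod.remove)
      have nd: "\<not> p dvd \<Prod>(S - {p})"
      proof
        assume "p dvd \<Prod>(S - {p})"
        then have "p \<in> S - {p}" using prime_dvd_prod_primes[of "S - {p}" p] fin pr p by auto
        then show False by simp
      qed
      have "p * p dvd p * (\<Prod>(S - {p}) * m)" using \<open>p^2 dvd n\<close> m S' by (simp add: power2_eq_square mult.assoc)
      moreover have "p \<noteq> 0" using pr p by (metis not_prime_0)
      ultimately have "p dvd \<Prod>(S - {p}) * m" by simp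
      then have "p dvd m" using nd pr p by (simp add: prime_dvd_mult_iff)
      then have "p dvd 1" using cop pd by (meson coprime_common_divisor)
      then show False using pr p by (metis not_prime_1 nat_dvd_1_iff_1)
    qed
    ultimately show "p dvd n \<and> \<not> p^2 dvd n" by simp
  qed
qed



definition Gc :: "nat \<Rightarrow> nat \<Rightarrow> nat" where
  "Gc d N = card {m. 1 \<le> m \<and> m \<le> N \<and> coprime m d}"

lemma Gc_Suc: "Gc d (Suc N) = Gc d N + (if coprime (Suc N) d then 1 else 0)"
proof -
  have e: "{m. 1 \<le> m \<and> m \<le> Suc N \<and> coprime m d} = {m. 1 \<le> m \<and> m \<le> N \<and> coprime m d} \<union> (if coprime (Suc N) d then {Suc N} else {})"
    by (auto simp: le_Suc_eq)
  have f: "finite {m. 1 \<le> m \<and> m \<le> N \<and> coprime m d}" by (rule finite_subset[of _ "{..N}"]) auto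
  show ?thesis unfolding Gc_def e using f by (auto simp: card_insert_if)
qed

lemma Gc_0 [simp]: "Gc d 0 = 0" unfolding Gc_def by simp

lemma Gc_add: "Gc d (N + d) = Gc d N + Gc d d"
proof (induction N)
  case 0 then show ?case by simp
next
  case (Suc N)
  have "coprime (Suc (N + d)) d \<longleftrightarrow> coprime (Suc N) d"
  proof -
    have "gcd (Suc N + d) d = gcd (Suc N) d" by (rule gcd_add1)
    then have "gcd (Suc (N + d)) d = gcd (Suc N) d" by simp
    then show ?thesis unfolding coprime_iff_gcd_eq_1 by (rule arg_cong[where f = "\<lambda>z. z = 1"])
  qed
  then show ?case using Suc by (simp add: Gc_Suc)
qed

lemma Gc_mult: "Gc d (q * d + r) = q * Gc d d + Gc d r"
proof (induction q)
  case 0 then show ?case by simp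
next
  case (Suc q)
  have "Gc d (Suc q * d + r) = Gc d ((q * d + r) + d)" by (simp add: algebra_simps)
  also have "\<dots> = Gc d (q * d + r) + Gc d d" by (rule Gc_add)
  finally show ?case using Suc by simp
qed

lemma Gc_mono: "N \<le> N' \<Longrightarrow> Gc d N \<le> Gc d N'"
proof -
  have "finite {m. 1 \<le> m \<and> m \<le> N' \<and> coprime m d}" by (rule finite_subset[of _ "{..N'}"]) auto
  then show "N \<le> N' \<Longrightarrow> Gc d N \<le> Gc d N'" unfolding Gc_def by (rule card_mono) auto
qed

lemma Gc_d: "Gc d d = totient d"
  unfolding Gc_def totient_def totatives_def by (intro arg_cong[where f = card]) auto

lemma Gc_bounds:
  assumes "d > 0"
  shows "real N / d * totient d - totient d \<le> Gc d N \<and> real (Gc d N) \<le> real N / d * totient d + totient d"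
proof -
  define q r where "q = N div d" and "r = N mod d"
  have N: "N = q * d + r" unfolding q_def r_def by simp
  have r: "r < d" unfolding r_def using assms by simp
  have G: "Gc d N = q * totient d + Gc d r" unfolding N Gc_mult Gc_d ..
  have Gr: "Gc d r \<le> totient d" using Gc_mono[of r d d] r Gc_d by simp
  have Nd: "real N / d = q + real r / d" using assms unfolding N by (simp add: field_simps)
  have r1: "real r / d < 1" "real r / d \<ge> 0" using r assms by auto
  have t0: "real (totient d) \<ge> 0" by simp
  have eq: "real N / d * totient d = real q * totient d + real r / d * totient d" unfolding Nd by (simp add: algebra_simps)
  have m1: "real r / d * totient d \<le> (1::real) * totient d" using r1 t0 by (intro mult_right_mono) auto
  have m2: "real r / d * totient d \<ge> 0" using r1 t0 by simp
  have GN: "real (Gc d N) = real q * totient d + real (Gc d r)" unfolding G by simp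
  have Gr': "real (Gc d r) \<le> totient d" using Gr by simp
  have Gr0: "real (Gc d r) \<ge> 0" by simp
  show ?thesis using eq m1 m2 GN Gr' Gr0 by linarith
qed

definition Fd :: "nat \<Rightarrow> real \<Rightarrow> nat" where
  "Fd d t = card {m. 1 \<le> m \<and> real m \<le> t \<and> coprime m d}"

lemma Fd_bounds:
  assumes "d > 0" "t \<ge> 0"
  shows "\<bar>real (Fd d t) - t / d * totient d\<bar> \<le> 2 * totient d"
proof -
  define N where "N = nat \<lfloor>t\<rfloor>"
  have iff: "real m \<le> t \<longleftrightarrow> m \<le> N" for m unfolding N_def using assms(2)
    by (simp add: le_nat_iff le_floor_iff)
  have FN: "Fd d t = Gc d N" unfolding Fd_def Gc_def iff ..
  have N1: "real N \<le> t" "t < real N + 1" unfolding N_def using assms(2) by linarith+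
  have B: "real N / d * totient d - totient d \<le> Gc d N \<and> real (Gc d N) \<le> real N / d * totient d + totient d"
    by (rule Gc_bounds[OF assms(1)])
  have dd: "real d \<ge> 1" using assms(1) by simp
  have t0: "real (totient d) \<ge> 0" by simp
  have Nd: "real N / d \<le> t / d" using N1 dd by (simp add: divide_right_mono)
  have u: "real N / d * totient d \<le> t / d * totient d" by (rule mult_right_mono[OF Nd t0])
  have "t / d - 1 \<le> real N / d"
  proof -
    have "t / d - 1 \<le> t / d - 1 / d" using dd by (simp add: field_simps)
    also have "\<dots> = (t - 1) / d" by (simp add: diff_divide_distrib)
    also have "\<dots> \<le> real N / d" using N1 dd by (simp add: divide_right_mono)
    finally show ?thesis .
  qed
  then have "(t / d - 1) * totient d \<le> real N / d * totient d" by (rule mult_right_mono[OF _ t0])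
  then have l: "t / d * totient d - totient d \<le> real N / d * totient d" by (simp add: algebra_simps)
  show ?thesis unfolding FN using B u l by linarith
qed


lemma interval_count:
  assumes "d > 0" "0 \<le> a" "a \<le> b"
  shows "card {m. a < real m \<and> real m \<le> b \<and> coprime m d} = Fd d b - Fd d a"
    and "Fd d a \<le> Fd d b"
proof -
  have e: "{m. 1 \<le> m \<and> real m \<le> b \<and> coprime m d} = {m. 1 \<le> m \<and> real m \<le> a \<and> coprime m d} \<union> {m. a < real m \<and> real m \<le> b \<and> coprime m d}"
  proof (intro equalityI subsetI)
    fix m assume "m \<in> {m. 1 \<le> m \<and> real m \<le> b \<and> coprime m d}"
    then show "m \<in> {m. 1 \<le> m \<and> real m \<le> a \<and> coprime m d} \<union> {m. a < real m \<and> real m \<le> b \<and> coprime m d}"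
      by auto
  next
    fix m assume m: "m \<in> {m. 1 \<le> m \<and> real m \<le> a \<and> coprime m d} \<union> {m. a < real m \<and> real m \<le> b \<and> coprime m d}"
    have "a < real m \<Longrightarrow> 1 \<le> m" using assms(2) by (cases m) auto
    then show "m \<in> {m. 1 \<le> m \<and> real m \<le> b \<and> coprime m d}" using m assms(3) by auto
  qed
  have fb: "finite {m. 1 \<le> m \<and> real m \<le> b \<and> coprime m d}"
  proof (rule finite_subset[of _ "{..nat \<lceil>b\<rceil>}"])
    show "{m. 1 \<le> m \<and> real m \<le> b \<and> coprime m d} \<subseteq> {..nat \<lceil>b\<rceil>}"
    proof
      fix m assume "m \<in> {m. 1 \<le> m \<and> real m \<le> b \<and> coprime m d}"
      then have "real m \<le> b" by simp
      then have "real m \<le> real (nat \<lceil>b\<rceil>)" by linarith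
      then show "m \<in> {..nat \<lceil>b\<rceil>}" by simp
    qed
  qed simp
  have f1: "finite {m. 1 \<le> m \<and> real m \<le> a \<and> coprime m d}" by (rule finite_subset[OF _ fb]) (use assms in auto)
  have f2: "finite {m. a < real m \<and> real m \<le> b \<and> coprime m d}" by (rule finite_subset[OF _ fb]) (use e in blast)
  have "Fd d b = Fd d a + card {m. a < real m \<and> real m \<le> b \<and> coprime m d}"
    unfolding Fd_def e by (rule card_Un_disjoint[OF f1 f2]) auto
  then show "card {m. a < real m \<and> real m \<le> b \<and> coprime m d} = Fd d b - Fd d a" "Fd d a \<le> Fd d b" by simp_all
qed



lemma sift_count:
  assumes fin: "finite S" and pr: "\<forall>p\<in>S. prime (p::nat)" and x: "x \<ge> 0" and y: "y \<ge> 0"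
  shows "\<bar>real (card {n::nat. x < real n \<and> real n \<le> x + y \<and> sifts S n}) - y * totient (\<Prod>S) / (\<Prod>S)^2\<bar> \<le> 4 * \<Prod>S"
proof -
  define d where "d = \<Prod>S"
  have d0: "d > 0" unfolding d_def using pr by (simp add: prime_gt_0_nat prod_pos)
  have dr: "real d > 0" using d0 by simp
  have img: "{n::nat. x < real n \<and> real n \<le> x + y \<and> sifts S n} = (\<lambda>m. d * m) ` {m. x / d < real m \<and> real m \<le> (x + y) / d \<and> coprime m d}"
  proof (intro equalityI subsetI)
      fix n assume "n \<in> {n::nat. x < real n \<and> real n \<le> x + y \<and> sifts S n}"
      then have n: "x < real n" "real n \<le> x + y" "d dvd n" "coprime (n div d) d"
        using sifts_iff[OF fin pr] unfolding d_def by auto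
      then obtain m where m: "n = d * m" by auto
      have "m = n div d" using m d0 by simp
      have "x / d < real m" using n(1) m dr by (simp add: divide_less_eq mult.commute)
      moreover have "real m \<le> (x + y) / d" using n(2) m dr by (simp add: le_divide_eq mult.commute)
      moreover have "coprime m d" using n(4) \<open>m = n div d\<close> by simp
      ultimately show "n \<in> (\<lambda>m. d * m) ` {m. x / d < real m \<and> real m \<le> (x + y) / d \<and> coprime m d}"
        using m by blast
    next
      fix n assume "n \<in> (\<lambda>m. d * m) ` {m. x / d < real m \<and> real m \<le> (x + y) / d \<and> coprime m d}"
      then obtain m where m: "n = d * m" "x / d < real m" "real m \<le> (x + y) / d" "coprime m d" by auto
      have "n div d = m" using m d0 by simp
      then have "sifts S n" using sifts_iff[OF fin pr] m unfolding d_def by auto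
      moreover have "x < real n" using m(1,2) dr by (simp add: divide_less_eq mult.commute)
      moreover have "real n \<le> x + y" using m(1,3) dr by (simp add: le_divide_eq mult.commute)
      ultimately show "n \<in> {n::nat. x < real n \<and> real n \<le> x + y \<and> sifts S n}" by blast
  qed
  have inj: "inj_on (\<lambda>m. d * m) A" for A using d0 by (auto intro: inj_onI)
  have cA: "card {n::nat. x < real n \<and> real n \<le> x + y \<and> sifts S n} = card {m. x / d < real m \<and> real m \<le> (x + y) / d \<and> coprime m d}"
    unfolding img by (rule card_image[OF inj])
  have a0: "0 \<le> x / d" using x dr by simp
  have ab: "x / d \<le> (x + y) / d" using y dr by (simp add: divide_right_mono)
  note ic = interval_count[OF d0 a0 ab]
  have Fa: "\<bar>real (Fd d (x/d)) - (x/d) / d * totient d\<bar> \<le> 2 * totient d" by (rule Fd_bounds[OF d0 a0])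
  have Fb: "\<bar>real (Fd d ((x+y)/d)) - ((x+y)/d) / d * totient d\<bar> \<le> 2 * totient d"
    by (rule Fd_bounds[OF d0]) (use a0 ab in linarith)
  have main: "((x+y)/d) / d * totient d - (x/d) / d * totient d = y * totient d / d^2"
    using dr by (simp add: field_simps power2_eq_square)
  have "real (card {m. x / d < real m \<and> real m \<le> (x + y) / d \<and> coprime m d}) = real (Fd d ((x+y)/d)) - real (Fd d (x/d))"
    using ic by simp
  then have "\<bar>real (card {n::nat. x < real n \<and> real n \<le> x + y \<and> sifts S n}) - y * totient d / d^2\<bar> \<le> 4 * totient d"
    using Fa Fb main cA by linarith
  moreover have "real (totient d) \<le> d" by (simp add: totient_le)
  ultimately show ?thesis unfolding d_def by (simp add: of_nat_prod)
qed



lemma sieve_ineq: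
  fixes I :: "nat set" and D :: "nat set set" and lam :: "nat set \<Rightarrow> real" and sf :: "nat set \<Rightarrow> nat \<Rightarrow> bool"
  assumes finI: "finite I" and finD: "finite D" and emp: "{} \<in> D" and lam0: "lam {} = 1"
    and sf0: "\<And>n. sf {} n" and sfU: "\<And>S1 S2 n. sf (S1 \<union> S2) n \<longleftrightarrow> sf S1 n \<and> sf S2 n"
  shows "real (card {n\<in>I. \<forall>S\<in>D. sf S n \<longrightarrow> S = {}})
         \<le> (\<Sum>S1\<in>D. \<Sum>S2\<in>D. lam S1 * lam S2 * real (card {n\<in>I. sf (S1 \<union> S2) n}))"
proof -
  define w where "w n = (\<Sum>S\<in>D. if sf S n then lam S else 0)" for n
  have w1: "w n = 1" if "\<forall>S\<in>D. sf S n \<longrightarrow> S = {}" for n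
  proof -
    have "w n = (\<Sum>S\<in>D. if S = {} then lam S else 0)"
      unfolding w_def using that sf0 by (intro sum.cong refl) auto
    also have "\<dots> = 1" using emp finD lam0 by (simp add: sum.delta)
    finally show ?thesis .
  qed
  have "real (card {n\<in>I. \<forall>S\<in>D. sf S n \<longrightarrow> S = {}}) = (\<Sum>n\<in>{n\<in>I. \<forall>S\<in>D. sf S n \<longrightarrow> S = {}}. (w n)^2)"
    using w1 by simp
  also have "\<dots> \<le> (\<Sum>n\<in>I. (w n)^2)"
    by (rule sum_mono2) (use finI in auto)
  also have "\<dots> = (\<Sum>n\<in>I. \<Sum>S1\<in>D. \<Sum>S2\<in>D. if sf (S1 \<union> S2) n then lam S1 * lam S2 else 0)"
  proof (rule sum.cong[OF refl])
    fix n
    have "(w n)^2 = (\<Sum>S1\<in>D. \<Sum>S2\<in>D. (if sf S1 n then lam S1 else 0) * (if sf S2 n then lam S2 else 0))"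
      unfolding w_def power2_eq_square by (rule sum_product)
    also have "\<dots> = (\<Sum>S1\<in>D. \<Sum>S2\<in>D. if sf (S1 \<union> S2) n then lam S1 * lam S2 else 0)"
      by (intro sum.cong refl) (auto simp: sfU)
    finally show "(w n)^2 = (\<Sum>S1\<in>D. \<Sum>S2\<in>D. if sf (S1 \<union> S2) n then lam S1 * lam S2 else 0)" .
  qed
  also have "\<dots> = (\<Sum>S1\<in>D. \<Sum>n\<in>I. \<Sum>S2\<in>D. if sf (S1 \<union> S2) n then lam S1 * lam S2 else 0)"
    by (rule sum.swap)
  also have "\<dots> = (\<Sum>S1\<in>D. \<Sum>S2\<in>D. \<Sum>n\<in>I. if sf (S1 \<union> S2) n then lam S1 * lam S2 else 0)"
    by (intro sum.cong refl sum.swap)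
  also have "\<dots> = (\<Sum>S1\<in>D. \<Sum>S2\<in>D. lam S1 * lam S2 * real (card {n\<in>I. sf (S1 \<union> S2) n}))"
  proof (intro sum.cong refl)
    fix S1 S2
    have "(\<Sum>n\<in>I. if sf (S1 \<union> S2) n then lam S1 * lam S2 else 0) = (\<Sum>n\<in>{n\<in>I. sf (S1 \<union> S2) n}. lam S1 * lam S2)"
      by (rule sum.inter_filter[OF finI, symmetric])
    then show "(\<Sum>n\<in>I. if sf (S1 \<union> S2) n then lam S1 * lam S2 else 0) = lam S1 * lam S2 * real (card {n\<in>I. sf (S1 \<union> S2) n})"
      by simp
  qed
  finally show ?thesis .
qed



definition DW :: "nat \<Rightarrow> nat set set" where
  "DW W = {T. T \<subseteq> {p. prime p \<and> p \<le> W} \<and> \<Prod>T \<le> W}"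

definition gp :: "nat \<Rightarrow> real" where
  "gp p = real (p - 1) / real p ^ 2"

lemma DW_fin_sets: "T \<in> DW W \<Longrightarrow> finite T \<and> (\<forall>p\<in>T. prime p)"
  unfolding DW_def by (auto intro: finite_subset[of _ "{..W}"])

lemma finite_DW: "finite (DW W)"
proof (rule finite_subset[of _ "Pow {..W}"])
  show "DW W \<subseteq> Pow {..W}" unfolding DW_def by auto
qed simp

lemma prod_subset_le:
  assumes "finite V" "\<forall>p\<in>V. prime (p::nat)" "S \<subseteq> V"
  shows "\<Prod>S \<le> \<Prod>V"
proof -
  have "\<Prod>S dvd \<Prod>V" using assms by (intro prod_dvd_prod_subset) auto
  moreover have "\<Prod>V > 0" using assms by (simp add: prime_gt_0_nat prod_pos)
  ultimately show ?thesis by (rule dvd_imp_le)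
qed

lemma DW_down: "V \<in> DW W \<Longrightarrow> S \<subseteq> V \<Longrightarrow> S \<in> DW W"
proof -
  assume V: "V \<in> DW W" and S: "S \<subseteq> V"
  have "\<Prod>S \<le> \<Prod>V" using DW_fin_sets[OF V] S by (intro prod_subset_le) auto
  then show "S \<in> DW W" using V S unfolding DW_def by auto
qed

lemma prod_primes_inj:
  assumes "finite S" "\<forall>p\<in>S. prime (p::nat)" "finite T" "\<forall>p\<in>T. prime p" "\<Prod>S = \<Prod>T"
  shows "S = T"
proof (intro equalityI subsetI)
  fix p assume p: "p \<in> S"
  have "p dvd \<Prod>T" using dvd_prodI[OF assms(1) p, of "\<lambda>x. x"] assms(5) by simp
  then show "p \<in> T" using prime_dvd_prod_primes[OF assms(3,4)] assms(2) p by auto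
next
  fix p assume p: "p \<in> T"
  have "p dvd \<Prod>S" using dvd_prodI[OF assms(3) p, of "\<lambda>x. x"] assms(5) by simp
  then show "p \<in> S" using prime_dvd_prod_primes[OF assms(1,2)] assms(4) p by auto
qed

lemma card_DW: "card (DW W) \<le> W"
proof -
  have inj: "inj_on (\<lambda>T. \<Prod>T) (DW W)"
    by (rule inj_onI) (use DW_fin_sets prod_primes_inj in metis)
  have sub: "(\<lambda>T. \<Prod>T) ` DW W \<subseteq> {1..W}"
  proof
    fix z assume "z \<in> (\<lambda>T. \<Prod>T) ` DW W"
    then obtain T where T: "T \<in> DW W" "z = \<Prod>T" by auto
    have "\<Prod>T > 0" using DW_fin_sets[OF T(1)] by (simp add: prime_gt_0_nat prod_pos)
    then show "z \<in> {1..W}" using T unfolding DW_def by auto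
  qed
  have "card (DW W) = card ((\<lambda>T. \<Prod>T) ` DW W)" by (rule card_image[OF inj, symmetric])
  also have "\<dots> \<le> card {1..W}" by (rule card_mono[OF _ sub]) simp
  finally show ?thesis by simp
qed

lemma g_eq:
  assumes fin: "finite S" and pr: "\<forall>p\<in>S. prime (p::nat)"
  shows "(\<Prod>p\<in>S. gp p) = real (totient (\<Prod>S)) / real (\<Prod>S) ^ 2"
proof -
  have "totient (\<Prod>S) = (\<Prod>p\<in>S. totient p)"
  proof (rule totient_prod_coprime)
    show "pairwise coprime ((\<lambda>x. x) ` S)" unfolding pairwise_def using pr
      by (auto simp: primes_coprime)
  qed auto
  also have "\<dots> = (\<Prod>p\<in>S. p - 1)" using pr by (intro prod.cong refl) (simp add: totient_prime)
  finally have t: "real (totient (\<Prod>S)) = (\<Prod>p\<in>S. real (p - 1))" by (simp add: of_nat_prod)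
  have "real (\<Prod>S) ^ 2 = (\<Prod>p\<in>S. real p ^ 2)" by (simp add: of_nat_prod prod_power_distrib)
  then show ?thesis unfolding t gp_def by (simp add: prod_dividef)
qed

lemma inv_g_le:
  assumes fin: "finite S" and pr: "\<forall>p\<in>S. prime (p::nat)"
  shows "1 / (\<Prod>p\<in>S. gp p) \<le> real (\<Prod>S) ^ 2"
proof -
  have "1 / (\<Prod>p\<in>S. gp p) = (\<Prod>p\<in>S. 1 / gp p)" by (simp add: prod_dividef)
  also have "\<dots> \<le> (\<Prod>p\<in>S. real p ^ 2)"
  proof (rule prod_mono)
    fix p assume "p \<in> S"
    then have p: "prime p" using pr by auto
    then have p2: "p \<ge> 2" by (simp add: prime_ge_2_nat)
    then have r: "real (p - 1) \<ge> 1" by simp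
    have "1 / gp p = real p ^ 2 / real (p - 1)" unfolding gp_def by simp
    also have "\<dots> \<le> real p ^ 2 / 1" by (rule divide_left_mono) (use r in auto)
    finally show "0 \<le> 1 / gp p \<and> 1 / gp p \<le> real p ^ 2"
      unfolding gp_def using p2 by simp
  qed
  also have "\<dots> = real (\<Prod>S) ^ 2" by (simp add: of_nat_prod prod_power_distrib)
  finally show ?thesis .
qed

lemma prod_union_le:
  assumes "finite S1" "finite S2" "\<forall>p\<in>S1 \<union> S2. prime (p::nat)"
  shows "\<Prod>(S1 \<union> S2) \<le> \<Prod>S1 * \<Prod>S2"
proof -
  have e: "\<Prod>(S1 \<union> S2) * \<Prod>(S1 \<inter> S2) = \<Prod>S1 * \<Prod>S2" by (rule prod.union_inter) (use assms in auto)
  have "\<Prod>(S1 \<inter> S2) > 0" using assms by (simp add: prime_gt_0_nat prod_pos)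
  then have "\<Prod>(S1 \<union> S2) \<le> \<Prod>(S1 \<union> S2) * \<Prod>(S1 \<inter> S2)" by simp
  then show ?thesis using e by simp
qed



lemma kfull_not_sifted:
  assumes k: "k \<ge> 2" and kf: "k_full k n" and s: "sifts S n"
  shows "S = {} \<or> (\<exists>p\<in>S. \<not> prime p)"
proof (rule ccontr)
  assume "\<not> (S = {} \<or> (\<exists>p\<in>S. \<not> prime p))"
  then obtain p where p: "p \<in> S" "prime p" by auto
  have "p dvd n" "\<not> p^2 dvd n" using s p unfolding sifts_def by auto
  moreover have "p^k dvd n" using kf p \<open>p dvd n\<close> unfolding k_full_def by auto
  moreover have "p^2 dvd p^k" using k by (simp add: le_imp_power_dvd)
  ultimately show False using dvd_trans by blast
qed

lemma main_bound:
  fixes x y :: real and W k :: nat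
  assumes k: "k \<ge> 2" and x: "x \<ge> 0" and y: "y \<ge> 0" and W: "W \<ge> 1"
  shows "real (card {n::nat. x < real n \<and> real n \<le> x + y \<and> k_full k n})
         \<le> y / (\<Sum>T\<in>DW W. \<Prod>p\<in>T. 1 / (1 / gp p - 1)) + 4 * real W ^ 8"
proof -
  define D where "D = DW W"
  define G where "G = (\<Sum>T\<in>D. \<Prod>p\<in>T. 1 / (1 / gp p - 1))"
  define g where "g = (\<lambda>S. \<Prod>p\<in>S. gp p)"
  have finD: "finite D" unfolding D_def by (rule finite_DW)
  have down: "\<And>V S. V \<in> D \<Longrightarrow> S \<subseteq> V \<Longrightarrow> S \<in> D" unfolding D_def by (rule DW_down)
  have fin: "\<And>V. V \<in> D \<Longrightarrow> finite V" and prD: "\<And>V. V \<in> D \<Longrightarrow> \<forall>p\<in>V. prime p"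
    unfolding D_def using DW_fin_sets by auto
  have emp: "{} \<in> D" unfolding D_def DW_def using W by auto
  have gpr: "0 < gp p \<and> gp p < 1" if "V \<in> D" "p \<in> V" for V p
  proof -
    have p2: "p \<ge> 2" using prD[OF that(1)] that(2) by (simp add: prime_ge_2_nat)
    then have a: "real (p - 1) > 0" by simp
    have "p - 1 < p" using p2 by simp
    moreover have "p \<le> p^2" by (simp add: power2_eq_square)
    ultimately have "p - 1 < p^2" by linarith
    then have b: "real (p - 1) < real p ^ 2" by (metis of_nat_less_iff of_nat_power)
    show ?thesis unfolding gp_def using a b by (simp add: field_simps)
  qed
  have sw: "G \<ge> 1 \<and> (\<exists>lam. lam {} = 1 \<and> (\<forall>S\<in>D. \<bar>lam S\<bar> \<le> 1 / g S) \<and>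
           (\<Sum>S1\<in>D. \<Sum>S2\<in>D. lam S1 * lam S2 * g (S1 \<union> S2)) = 1 / G)"
    unfolding G_def g_def
  proof (rule selberg_weights)
    show "finite D" by (rule finD)
    show "\<And>V S. V \<in> D \<Longrightarrow> S \<subseteq> V \<Longrightarrow> S \<in> D" by (rule down)
    show "\<And>V. V \<in> D \<Longrightarrow> finite V" by (rule fin)
    show "{} \<in> D" by (rule emp)
    show "\<And>V p. V \<in> D \<Longrightarrow> p \<in> V \<Longrightarrow> 0 < gp p \<and> gp p < 1" by (rule gpr)
  qed
  then obtain lam where G1: "G \<ge> 1" and lam0: "lam {} = 1" and lamb: "\<forall>S\<in>D. \<bar>lam S\<bar> \<le> 1 / g S"
    and Q: "(\<Sum>S1\<in>D. \<Sum>S2\<in>D. lam S1 * lam S2 * g (S1 \<union> S2)) = 1 / G"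
    by blast
  define I where "I = {n::nat. x < real n \<and> real n \<le> x + y}"
  have finI: "finite I" unfolding I_def
  proof (rule finite_subset[of _ "{..nat \<lceil>x + y\<rceil>}"])
    show "{n::nat. x < real n \<and> real n \<le> x + y} \<subseteq> {..nat \<lceil>x + y\<rceil>}"
    proof
      fix m assume "m \<in> {n::nat. x < real n \<and> real n \<le> x + y}"
      then have "real m \<le> x + y" by simp
      then have "real m \<le> real (nat \<lceil>x + y\<rceil>)" by linarith
      then show "m \<in> {..nat \<lceil>x + y\<rceil>}" by simp
    qed
  qed simp
  define c where "c U = real (card {n\<in>I. sifts U n})" for U
  have c_eq: "c U = real (card {n::nat. x < real n \<and> real n \<le> x + y \<and> sifts U n})" for U
    unfolding c_def I_def by (simp add: conj_assoc)
  have cb: "\<bar>c U - y * g U\<bar> \<le> 4 * real W ^ 2" if U: "U = S1 \<union> S2" "S1 \<in> D" "S2 \<in> D" for U S1 S2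
  proof -
    have fU: "finite U" and pU: "\<forall>p\<in>U. prime p" using U fin prD by auto
    have "\<bar>c U - y * g U\<bar> \<le> real (4 * \<Prod>U)"
      unfolding c_eq g_def g_eq[OF fU pU] using sift_count[OF fU pU x y] by simp
    also have "\<dots> \<le> 4 * (real (\<Prod>S1) * real (\<Prod>S2))"
    proof -
      have "\<forall>p\<in>S1 \<union> S2. prime p" using U prD by auto
      then have "\<Prod>U \<le> \<Prod>S1 * \<Prod>S2" using prod_union_le[OF fin[OF U(2)] fin[OF U(3)]] U(1) by simp
      then have "real (\<Prod>U) \<le> real (\<Prod>S1) * real (\<Prod>S2)" by (metis of_nat_le_iff of_nat_mult)
      then show ?thesis by simp
    qed
    also have "\<dots> \<le> 4 * (real W * real W)"
    proof -
      have a1: "\<Prod>S1 \<le> W" "\<Prod>S2 \<le> W" using U unfolding D_def DW_def by auto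
      have h1: "real (\<Prod>S1) \<le> real W" using a1(1) by (simp only: of_nat_le_iff)
      have h2: "real (\<Prod>S2) \<le> real W" using a1(2) by (simp only: of_nat_le_iff)
      have "real (\<Prod>S1) * real (\<Prod>S2) \<le> real W * real W"
        by (rule mult_mono[OF h1 h2]) (simp_all only: of_nat_0_le_iff)
      then show ?thesis by simp
    qed
    finally show ?thesis by (simp add: power2_eq_square)
  qed
  have lb: "\<bar>lam S\<bar> \<le> real W ^ 2" if "S \<in> D" for S
  proof -
    have "\<bar>lam S\<bar> \<le> 1 / g S" using lamb that by auto
    also have "\<dots> \<le> real (\<Prod>S) ^ 2" unfolding g_def by (rule inv_g_le[OF fin[OF that] prD[OF that]])
    also have "\<dots> \<le> real W ^ 2"
    proof -
      have "\<Prod>S \<le> W" using that unfolding D_def DW_def by auto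
      then have "real (\<Prod>S) \<le> real W" by (simp only: of_nat_le_iff)
      then show ?thesis by (rule power_mono) (simp only: of_nat_0_le_iff)
    qed
    finally show ?thesis .
  qed
  have "{n::nat. x < real n \<and> real n \<le> x + y \<and> k_full k n} \<subseteq> {n\<in>I. \<forall>S\<in>D. sifts S n \<longrightarrow> S = {}}"
  proof
    fix n assume n: "n \<in> {n::nat. x < real n \<and> real n \<le> x + y \<and> k_full k n}"
    have "\<forall>S\<in>D. sifts S n \<longrightarrow> S = {}"
    proof (intro ballI impI)
      fix S assume "S \<in> D" "sifts S n"
      then show "S = {}" using kfull_not_sifted[OF k, of n S] prD[OF \<open>S \<in> D\<close>] n by auto
    qed
    then show "n \<in> {n\<in>I. \<forall>S\<in>D. sifts S n \<longrightarrow> S = {}}" using n unfolding I_def by auto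
  qed
  then have "real (card {n::nat. x < real n \<and> real n \<le> x + y \<and> k_full k n}) \<le> real (card {n\<in>I. \<forall>S\<in>D. sifts S n \<longrightarrow> S = {}})"
    using finI by (intro of_nat_mono card_mono) auto
  also have "\<dots> \<le> (\<Sum>S1\<in>D. \<Sum>S2\<in>D. lam S1 * lam S2 * c (S1 \<union> S2))"
    unfolding c_def
  proof (rule sieve_ineq[where sf = sifts, OF finI finD emp, of lam, OF lam0])
    show "\<And>n. sifts {} n" by (simp add: sifts_def)
    show "\<And>S1 S2 n. sifts (S1 \<union> S2) n = (sifts S1 n \<and> sifts S2 n)" by (auto simp: sifts_def)
  qed
  also have "\<dots> = (\<Sum>S1\<in>D. \<Sum>S2\<in>D. lam S1 * lam S2 * (y * g (S1 \<union> S2)))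
                 + (\<Sum>S1\<in>D. \<Sum>S2\<in>D. lam S1 * lam S2 * (c (S1 \<union> S2) - y * g (S1 \<union> S2)))"
    unfolding sum.distrib[symmetric] by (intro sum.cong refl) (simp add: algebra_simps)
  also have "(\<Sum>S1\<in>D. \<Sum>S2\<in>D. lam S1 * lam S2 * (y * g (S1 \<union> S2))) = y / G"
  proof -
    have "(\<Sum>S1\<in>D. \<Sum>S2\<in>D. lam S1 * lam S2 * (y * g (S1 \<union> S2))) = y * (\<Sum>S1\<in>D. \<Sum>S2\<in>D. lam S1 * lam S2 * g (S1 \<union> S2))"
      unfolding sum_distrib_left by (intro sum.cong refl) (simp add: mult_ac)
    then show ?thesis using Q by simp
  qed
  also have "(\<Sum>S1\<in>D. \<Sum>S2\<in>D. lam S1 * lam S2 * (c (S1 \<union> S2) - y * g (S1 \<union> S2))) \<le> 4 * real W ^ 8"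
  proof -
    have trm: "lam S1 * lam S2 * (c (S1 \<union> S2) - y * g (S1 \<union> S2)) \<le> 4 * real W ^ 6"
      if "S1 \<in> D" "S2 \<in> D" for S1 S2
    proof -
      have "lam S1 * lam S2 * (c (S1 \<union> S2) - y * g (S1 \<union> S2)) \<le> \<bar>lam S1\<bar> * \<bar>lam S2\<bar> * \<bar>c (S1 \<union> S2) - y * g (S1 \<union> S2)\<bar>"
        by (simp add: abs_mult[symmetric])
      also have "\<dots> \<le> real W ^ 2 * real W ^ 2 * (4 * real W ^ 2)"
        using lb[OF that(1)] lb[OF that(2)] cb[OF refl that]
        by (intro mult_mono) auto
      finally show ?thesis by (simp add: power_add[symmetric] mult_ac)
    qed
    have "(\<Sum>S1\<in>D. \<Sum>S2\<in>D. lam S1 * lam S2 * (c (S1 \<union> S2) - y * g (S1 \<union> S2)))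
        \<le> (\<Sum>S1\<in>D. \<Sum>S2\<in>D. 4 * real W ^ 6)"
      using trm by (intro sum_mono) auto
    also have "\<dots> = real (card D) * real (card D) * (4 * real W ^ 6)" by simp
    also have "\<dots> \<le> real W * real W * (4 * real W ^ 6)"
      using card_DW[of W] unfolding D_def by (intro mult_mono) auto
    also have "\<dots> = 4 * real W ^ 8" by (simp add: eval_nat_numeral)
    finally show ?thesis .
  qed
  finally show ?thesis unfolding G_def D_def by simp
qed



lemma sqf_prod:
  assumes "(n::nat) > 0"
  shows "\<Prod>(prime_factors (squarefree_part n)) = squarefree_part n"
proof -
  define m where "m = squarefree_part n"
  have m0: "m > 0" unfolding m_def using squarefree_part_nonzero[of n] by (metis neq0_conv)
  have "m = (\<Prod>p \<in> prime_factors m. p ^ multiplicity p m)" by (rule prime_factorization_nat[OF m0])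
  also have "\<dots> = (\<Prod>p \<in> prime_factors m. p)"
  proof (rule prod.cong[OF refl])
    fix p assume p: "p \<in> prime_factors m"
    then have pr: "prime p" and "multiplicity p m > 0" by (auto simp: prime_factors_multiplicity)
    moreover have "multiplicity p m \<le> Suc 0" unfolding m_def using pr by blast
    ultimately have "multiplicity p m = 1" by simp
    then show "p ^ multiplicity p m = p" by simp
  qed
  finally show ?thesis unfolding m_def by simp
qed

lemma prod_ge_1_minus_sum:
  fixes f :: "'a \<Rightarrow> real"
  assumes "finite A" "\<And>i. i \<in> A \<Longrightarrow> 0 \<le> f i \<and> f i \<le> 1"
  shows "(\<Prod>i\<in>A. 1 - f i) \<ge> 1 - (\<Sum>i\<in>A. f i)"
  using assms
proof (induction A rule: finite_induct)
  case empty then show ?case by simp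
next
  case (insert a A)
  have IH: "(\<Prod>i\<in>A. 1 - f i) \<ge> 1 - (\<Sum>i\<in>A. f i)" using insert by auto
  have fa: "0 \<le> f a" "f a \<le> 1" using insert by auto
  have P0: "(\<Prod>i\<in>A. 1 - f i) \<ge> 0" using insert by (intro prod_nonneg) auto
  have P1: "(\<Prod>i\<in>A. 1 - f i) \<le> 1" using insert by (intro prod_le_1) auto
  have S0: "(\<Sum>i\<in>A. f i) \<ge> 0" using insert by (intro sum_nonneg) auto
  have "(1 - f a) * (\<Prod>i\<in>A. 1 - f i) = (\<Prod>i\<in>A. 1 - f i) - f a * (\<Prod>i\<in>A. 1 - f i)" by (simp add: algebra_simps)
  also have "\<dots> \<ge> (1 - (\<Sum>i\<in>A. f i)) - f a"
  proof -
    have "f a * (\<Prod>i\<in>A. 1 - f i) \<le> f a * 1" using fa P1 by (intro mult_left_mono) auto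
    then show ?thesis using IH by linarith
  qed
  finally show ?case using insert by simp
qed

definition aa :: "nat \<Rightarrow> real" where "aa n = 1 / (real n ^ 2 - real n + 1)"

lemma aa_nonneg: "aa n \<ge> 0"
proof -
  have "real n ^ 2 - real n + 1 > 0"
  proof (cases "n = 0")
    case False
    then have "real n ^ 2 \<ge> real n" by (simp add: power2_eq_square)
    then show ?thesis by linarith
  qed simp
  then show ?thesis unfolding aa_def by simp
qed

lemma aa_le: "n \<ge> 2 \<Longrightarrow> aa n \<le> 1 / (real n - 1) - 1 / real n"
proof -
  assume n: "n \<ge> 2"
  then have r: "real n \<ge> 2" by simp
  have e: "1 / (real n - 1) - 1 / real n = 1 / (real n ^ 2 - real n)" using r
    by (simp add: field_simps power2_eq_square)
  have pos: "real n ^ 2 - real n > 0" using r by (simp add: power2_eq_square)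
  then have pos2: "real n ^ 2 - real n + 1 > 0" by linarith
  have "1 / (real n ^ 2 - real n + 1) \<le> 1 / (real n ^ 2 - real n)"
    by (rule divide_left_mono) (use pos pos2 in auto)
  then show ?thesis unfolding aa_def e .
qed

lemma aa_sum_aux: "W \<ge> 2 \<Longrightarrow> (\<Sum>n\<in>{2..W}. aa n) \<le> 5/6 - 1 / real W"
proof (induction W rule: dec_induct)
  case base
  show ?case by (simp add: aa_def)
next
  case (step W)
  have "(\<Sum>n\<in>{2..Suc W}. aa n) = (\<Sum>n\<in>{2..W}. aa n) + aa (Suc W)"
    using step by (simp add: atLeastAtMostSuc_conv add.commute)
  also have "\<dots> \<le> (5/6 - 1 / real W) + (1 / (real (Suc W) - 1) - 1 / real (Suc W))"
    using step aa_le[of "Suc W"] by (intro add_mono) auto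
  also have "\<dots> = 5/6 - 1 / real (Suc W)" by simp
  finally show ?case .
qed

lemma aa_sum: "(\<Sum>n\<in>{2..W}. aa n) \<le> 5/6"
proof (cases "W \<ge> 2")
  case True
  have "0 \<le> 1 / real W" by simp
  then show ?thesis using aa_sum_aux[OF True] by linarith
next
  case False
  then have "{2..W} = {}" by auto
  then show ?thesis by simp
qed

lemma inv_sq_sum: "(\<Sum>s\<in>{1..W}. 1 / real s ^ 2) \<le> 2"
proof -
  have aux: "W \<ge> 1 \<Longrightarrow> (\<Sum>s\<in>{1..W}. 1 / real s ^ 2) \<le> 2 - 1 / real W"
  proof (induction W rule: dec_induct)
    case base then show ?case by simp
  next
    case (step W)
    have "(\<Sum>s\<in>{1..Suc W}. 1 / real s ^ 2) = (\<Sum>s\<in>{1..W}. 1 / real s ^ 2) + 1 / real (Suc W) ^ 2"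
      by (simp add: atLeastAtMostSuc_conv add.commute)
    also have "\<dots> \<le> (2 - 1 / real W) + (1 / real W - 1 / real (Suc W))"
    proof (intro add_mono step.IH)
      have w: "real W \<ge> 1" using step by simp
      have "1 / real W - 1 / real (Suc W) = 1 / (real W * real (Suc W))" using w by (simp add: field_simps)
      also have "\<dots> \<ge> 1 / (real (Suc W) * real (Suc W))" using w by (intro divide_left_mono mult_right_mono) auto
      finally show "1 / real (Suc W) ^ 2 \<le> 1 / real W - 1 / real (Suc W)" by (simp add: power2_eq_square)
    qed
    also have "\<dots> = 2 - 1 / real (Suc W)" by simp
    finally show ?case .
  qed
  show ?thesis
  proof (cases "W \<ge> 1")
    case True
    have "0 \<le> 1 / real W" by simp
    then show ?thesis using aux[OF True] by linarith
  next
    case False then show ?thesis by simp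
  qed
qed



lemma h_eq:
  assumes "prime p"
  shows "1 / (1 / gp p - 1) = (1 / real p) * (1 - aa p)"
proof -
  have p2: "p \<ge> 2" using assms by (simp add: prime_ge_2_nat)
  then have r: "real p \<ge> 2" by simp
  have rp: "real (p - 1) = real p - 1" using p2 by simp
  have "real p ^ 2 \<ge> real p" using r by (simp add: power2_eq_square)
  then have d1: "real p ^ 2 - real p + 1 > 0" by linarith
  have d2: "real p - 1 > 0" using r by simp
  have g1: "1 / gp p = real p ^ 2 / (real p - 1)" unfolding gp_def rp by simp
  have "real p ^ 2 / (real p - 1) - 1 = (real p ^ 2 - real p + 1) / (real p - 1)" using d2 by (simp add: field_simps)
  then have "1 / gp p - 1 = (real p ^ 2 - real p + 1) / (real p - 1)" unfolding g1 .
  then have "1 / (1 / gp p - 1) = (real p - 1) / (real p ^ 2 - real p + 1)" by simp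
  also have "\<dots> = (1 / real p) * (1 - aa p)"
  proof -
    have a1: "1 - aa p = (real p ^ 2 - real p) / (real p ^ 2 - real p + 1)"
      unfolding aa_def using d1 by (simp add: field_simps)
    have a2: "real p ^ 2 - real p = real p * (real p - 1)" by (simp add: power2_eq_square algebra_simps)
    have "(1 / real p) * ((real p * (real p - 1)) / (real p ^ 2 - real p + 1)) = (real p - 1) / (real p ^ 2 - real p + 1)"
      using r p2 by simp
    then show ?thesis unfolding a1 a2 using p2 by simp
  qed
  finally show ?thesis .
qed

lemma aa_le1: "aa n \<le> 1"
proof -
  have "real n ^ 2 \<ge> real n"
  proof (cases "n = 0")
    case False then show ?thesis by (simp add: power2_eq_square)
  qed simp
  then have X: "real n ^ 2 - real n + 1 \<ge> 1" by linarith
  have "1 / (real n ^ 2 - real n + 1) \<le> 1 / 1"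
  proof (rule divide_left_mono)
    show "1 \<le> real n ^ 2 - real n + 1" by (rule X)
    show "0 \<le> (1::real)" by simp
    show "0 < (real n ^ 2 - real n + 1) * 1" using X by (simp only: mult_1_right)
  qed
  then show ?thesis unfolding aa_def by simp
qed

lemma H_lower:
  assumes T: "T \<in> DW W"
  shows "(\<Prod>p\<in>T. 1 / (1 / gp p - 1)) \<ge> (1/6) * (1 / real (\<Prod>T))"
proof -
  have fin: "finite T" and pr: "\<forall>p\<in>T. prime p" using DW_fin_sets[OF T] by auto
  have sub: "T \<subseteq> {2..W}" using T pr unfolding DW_def by (auto simp: prime_ge_2_nat)
  have "(\<Prod>p\<in>T. 1 / (1 / gp p - 1)) = (\<Prod>p\<in>T. (1 / real p) * (1 - aa p))"
    using pr by (intro prod.cong refl h_eq) auto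
  also have "\<dots> = (\<Prod>p\<in>T. 1 / real p) * (\<Prod>p\<in>T. 1 - aa p)" by (rule prod.distrib)
  also have "(\<Prod>p\<in>T. 1 / real p) = 1 / real (\<Prod>T)" by (simp add: of_nat_prod prod_dividef)
  finally have e: "(\<Prod>p\<in>T. 1 / (1 / gp p - 1)) = 1 / real (\<Prod>T) * (\<Prod>p\<in>T. 1 - aa p)" .
  have "(\<Prod>p\<in>T. 1 - aa p) \<ge> 1 - (\<Sum>p\<in>T. aa p)"
    by (rule prod_ge_1_minus_sum[OF fin]) (simp add: aa_nonneg aa_le1)
  moreover have "(\<Sum>p\<in>T. aa p) \<le> (\<Sum>n\<in>{2..W}. aa n)"
    by (rule sum_mono2[OF _ sub]) (simp_all add: aa_nonneg)
  ultimately have "(\<Prod>p\<in>T. 1 - aa p) \<ge> 1/6" using aa_sum[of W] by linarith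
  moreover have "1 / real (\<Prod>T) \<ge> 0" by (rule divide_nonneg_nonneg) (simp_all only: zero_le_one of_nat_0_le_iff)
  ultimately have "1 / real (\<Prod>T) * (\<Prod>p\<in>T. 1 - aa p) \<ge> 1 / real (\<Prod>T) * (1/6)"
    by (intro mult_left_mono) auto
  then show ?thesis unfolding e by (simp add: mult_ac)
qed

lemma recip_sum:
  assumes W: "W \<ge> 1"
  shows "(\<Sum>T\<in>DW W. 1 / real (\<Prod>T)) \<ge> ln (real W + 1) / 2"
proof -
  define phi where "phi n = (prime_factors (squarefree_part n), square_part n)" for n :: nat
  have dec: "n = \<Prod>(fst (phi n)) * (snd (phi n))^2" if "n \<in> {1..W}" for n
    unfolding phi_def using sqf_prod[of n] that squarefree_decompose[of n] by simp
  have inj: "inj_on phi {1..W}"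
  proof (rule inj_onI)
    fix n1 n2 assume a: "n1 \<in> {1..W}" "n2 \<in> {1..W}" "phi n1 = phi n2"
    have "n1 = \<Prod>(fst (phi n1)) * (snd (phi n1))^2" by (rule dec[OF a(1)])
    also have "\<dots> = \<Prod>(fst (phi n2)) * (snd (phi n2))^2" using a(3) by simp
    also have "\<dots> = n2" by (rule dec[OF a(2), symmetric])
    finally show "n1 = n2" .
  qed
  have img: "phi ` {1..W} \<subseteq> DW W \<times> {1..W}"
  proof
    fix z assume "z \<in> phi ` {1..W}"
    then obtain n where n: "n \<in> {1..W}" "z = phi n" by auto
    have n0: "n \<noteq> 0" using n by simp
    have sd: "squarefree_part n dvd n" by (metis dvd_triv_left squarefree_decompose)
    have "prime_factors (squarefree_part n) \<in> DW W"
      unfolding DW_def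
    proof (intro CollectI conjI)
      show "prime_factors (squarefree_part n) \<subseteq> {p. prime p \<and> p \<le> W}"
      proof
      fix p assume p: "p \<in> prime_factors (squarefree_part n)"
      then have "prime p" "p dvd n" using sd by (auto intro: dvd_trans)
      moreover have "p \<le> n" using \<open>p dvd n\<close> n0 by (simp add: dvd_imp_le)
      ultimately show "p \<in> {p. prime p \<and> p \<le> W}" using n by auto
      qed
    next
      have "squarefree_part n \<le> n" using sd n0 by (simp add: dvd_imp_le)
      then show "\<Prod>(prime_factors (squarefree_part n)) \<le> W" using sqf_prod[of n] n by simp
    qed
    moreover have "square_part n \<in> {1..W}"
    proof -
      have "square_part n \<noteq> 0" using n0 by simp
      then have s0: "square_part n \<ge> 1" by arith
      have "square_part n ^ 2 dvd n" by simp
      then have "square_part n ^ 2 \<le> n" using n0 by (simp add: dvd_imp_le)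
      moreover have "square_part n \<le> square_part n ^ 2" by (simp add: power2_eq_square)
      ultimately show ?thesis using s0 n by auto
    qed
    ultimately show "z \<in> DW W \<times> {1..W}" unfolding n(2) phi_def by simp
  qed
  define f where "f z = 1 / (real (\<Prod>(fst z)) * real (snd z) ^ 2)" for z :: "nat set \<times> nat"
  have "ln (real W + 1) \<le> harm W" by (rule ln_le_harm)
  also have "harm W = (\<Sum>n\<in>{1..W}. 1 / real n)" unfolding harm_def by (simp add: divide_inverse)
  also have "\<dots> = (\<Sum>n\<in>{1..W}. f (phi n))"
  proof (rule sum.cong[OF refl])
    fix n assume n: "n \<in> {1..W}"
    have "real n = real (\<Prod>(fst (phi n))) * real (snd (phi n)) ^ 2"
      using dec[OF n] by (metis of_nat_mult of_nat_power)
    then show "1 / real n = f (phi n)" unfolding f_def by simp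
  qed
  also have "\<dots> = (\<Sum>z\<in>phi ` {1..W}. f z)" by (rule sym, rule sum.reindex_cong[OF inj]) auto
  also have "\<dots> \<le> (\<Sum>z\<in>DW W \<times> {1..W}. f z)"
  proof (rule sum_mono2[OF _ img])
    show "finite (DW W \<times> {1..W})" by (simp add: finite_DW)
    fix z
    show "0 \<le> f z" unfolding f_def
    proof (rule divide_nonneg_nonneg)
      show "0 \<le> (1::real)" by simp
      show "0 \<le> real (\<Prod>(fst z)) * real (snd z) ^ 2"
        by (rule mult_nonneg_nonneg) (simp_all only: of_nat_0_le_iff zero_le_power2)
    qed
  qed
  also have "\<dots> = (\<Sum>T\<in>DW W. \<Sum>s\<in>{1..W}. f (T, s))" by (simp add: sum.cartesian_product case_prod_unfold)
  also have "\<dots> = (\<Sum>T\<in>DW W. 1 / real (\<Prod>T)) * (\<Sum>s\<in>{1..W}. 1 / real s ^ 2)"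
    unfolding sum_product f_def by (intro sum.cong refl) simp
  also have "\<dots> \<le> (\<Sum>T\<in>DW W. 1 / real (\<Prod>T)) * 2"
  proof (rule mult_left_mono[OF inv_sq_sum])
    show "0 \<le> (\<Sum>T\<in>DW W. 1 / real (\<Prod>T))"
    proof (rule sum_nonneg)
      fix T show "0 \<le> 1 / real (\<Prod>T)" by (rule divide_nonneg_nonneg) (simp_all only: zero_le_one of_nat_0_le_iff)
    qed
  qed
  finally show ?thesis by simp
qed

lemma G_lower:
  assumes W: "W \<ge> 1"
  shows "(\<Sum>T\<in>DW W. \<Prod>p\<in>T. 1 / (1 / gp p - 1)) \<ge> ln (real W + 1) / 12"
proof -
  have "(\<Sum>T\<in>DW W. \<Prod>p\<in>T. 1 / (1 / gp p - 1)) \<ge> (\<Sum>T\<in>DW W. (1/6) * (1 / real (\<Prod>T)))"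
    by (intro sum_mono H_lower)
  also have "(\<Sum>T\<in>DW W. (1/6) * (1 / real (\<Prod>T))) = (1/6) * (\<Sum>T\<in>DW W. 1 / real (\<Prod>T))"
    by (simp add: sum_distrib_left)
  finally show ?thesis using recip_sum[OF W] by linarith
qed



lemma Q_diff:
  assumes x: "x \<ge> 0" and y: "y \<ge> 0"
  shows "real (Q k (x + y)) - real (Q k x) = real (card {n::nat. x < real n \<and> real n \<le> x + y \<and> k_full k n})"
proof -
  define A where "A = {n::nat. n \<ge> 1 \<and> real n \<le> x \<and> k_full k n}"
  define B where "B = {n::nat. x < real n \<and> real n \<le> x + y \<and> k_full k n}"
  have fin: "finite {n::nat. n \<ge> 1 \<and> real n \<le> x + y \<and> k_full k n}"
  proof (rule finite_subset[of _ "{..nat \<lceil>x + y\<rceil>}"])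
    show "{n::nat. n \<ge> 1 \<and> real n \<le> x + y \<and> k_full k n} \<subseteq> {..nat \<lceil>x + y\<rceil>}"
    proof
      fix m assume "m \<in> {n::nat. n \<ge> 1 \<and> real n \<le> x + y \<and> k_full k n}"
      then have "real m \<le> x + y" by simp
      then have "real m \<le> real (nat \<lceil>x + y\<rceil>)" by linarith
      then show "m \<in> {..nat \<lceil>x + y\<rceil>}" by simp
    qed
  qed simp
  have e: "{n::nat. n \<ge> 1 \<and> real n \<le> x + y \<and> k_full k n} = A \<union> B"
  proof (intro equalityI subsetI)
    fix n assume "n \<in> {n::nat. n \<ge> 1 \<and> real n \<le> x + y \<and> k_full k n}"
    then show "n \<in> A \<union> B" unfolding A_def B_def by auto
  next
    fix n assume n: "n \<in> A \<union> B"
    have "x < real n \<Longrightarrow> n \<ge> 1" using x by (cases n) auto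
    then show "n \<in> {n::nat. n \<ge> 1 \<and> real n \<le> x + y \<and> k_full k n}" using n y unfolding A_def B_def by auto
  qed
  have fA: "finite A" by (rule finite_subset[OF _ fin]) (use e in blast)
  have fB: "finite B" by (rule finite_subset[OF _ fin]) (use e in blast)
  have "Q k (x + y) = card A + card B"
    unfolding Q_def e by (rule card_Un_disjoint[OF fA fB]) (auto simp: A_def B_def)
  moreover have "Q k x = card A" unfolding Q_def A_def ..
  ultimately show ?thesis unfolding B_def by simp
qed

lemma trivial_bound:
  assumes x: "x \<ge> 0" and y: "y \<ge> 0"
  shows "real (card {n::nat. x < real n \<and> real n \<le> x + y \<and> k_full k n}) \<le> y + 4"
proof -
  have a: "real (card {n::nat. x < real n \<and> real n \<le> x + y}) \<le> y + 4"
    using sift_count[of "{}" x y] x y by (simp add: sifts_def)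
  have fin: "finite {n::nat. x < real n \<and> real n \<le> x + y}"
  proof (rule finite_subset[of _ "{..nat \<lceil>x + y\<rceil>}"])
    show "{n::nat. x < real n \<and> real n \<le> x + y} \<subseteq> {..nat \<lceil>x + y\<rceil>}"
    proof
      fix m assume "m \<in> {n::nat. x < real n \<and> real n \<le> x + y}"
      then have "real m \<le> x + y" by simp
      then have "real m \<le> real (nat \<lceil>x + y\<rceil>)" by linarith
      then show "m \<in> {..nat \<lceil>x + y\<rceil>}" by simp
    qed
  qed simp
  have "card {n::nat. x < real n \<and> real n \<le> x + y \<and> k_full k n} \<le> card {n::nat. x < real n \<and> real n \<le> x + y}"
    by (rule card_mono[OF fin]) auto
  then show ?thesis using a by linarith
qed

theorem theorem1:
  fixes k :: nat
  assumes "k \<ge> 2"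
  shows "\<exists>C>0. \<forall>x y::real. 1 \<le> x \<longrightarrow> 1 \<le> y \<longrightarrow> y \<le> x \<longrightarrow>
           real (Q k (x + y)) - real (Q k x) \<le> C * (y / ln (y + 1))"
proof (intro exI[of _ 400] conjI allI impI)
  fix x y :: real
  assume x1: "1 \<le> x" and y1: "1 \<le> y" and yx: "y \<le> x"
  define N where "N = real (card {n::nat. x < real n \<and> real n \<le> x + y \<and> k_full k n})"
  have QN: "real (Q k (x + y)) - real (Q k x) = N" unfolding N_def by (rule Q_diff) (use x1 y1 in auto)
  have lpos: "ln (y + 1) > 0" using y1 by simp
  have lle: "ln (y + 1) \<le> y" using ln_le_minus_one[of "y + 1"] y1 by simp
  show "real (Q k (x + y)) - real (Q k x) \<le> 400 * (y / ln (y + 1))"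
  proof (cases "y < 3")
    case True
    have "N \<le> y + 4" unfolding N_def by (rule trivial_bound) (use x1 y1 in auto)
    also have "\<dots> \<le> 5 * y" using y1 by simp
    also have "\<dots> \<le> 400 * (y / ln (y + 1))"
    proof -
      have "ln (y + 1) \<le> 80" using lle True by simp
      then have "5 * ln (y + 1) \<le> 400" by simp
      then have "5 * y * ln (y + 1) \<le> 400 * y" using y1 by (simp add: mult.commute mult_left_mono[of _ _ y, simplified])
      then show ?thesis using lpos by (simp add: field_simps)
    qed
    finally show ?thesis unfolding QN .
  next
    case False
    then have y3: "y \<ge> 3" by simp
    define u where "u = y powr (1/10)"
    have u1: "u \<ge> 1" unfolding u_def using y1 by (intro ge_one_powr_ge_zero) auto
    have yu: "y = u ^ 10"
    proof -
      have "u ^ 10 = u powr (real 10)" using u1 by (simp add: powr_realpow)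
      also have "\<dots> = y powr (1/10 * 10)" unfolding u_def using y1 by (simp add: powr_powr)
      finally show ?thesis using y1 by simp
    qed
    define W where "W = nat \<lfloor>u\<rfloor>"
    have W1: "W \<ge> 1" unfolding W_def using u1 by linarith
    have Wu: "real W \<le> u" "u < real W + 1" unfolding W_def using u1 by linarith+
    have ulog: "ln y = 10 * ln u" using yu u1 by (simp add: ln_realpow)
    have "ln y > 0" using y3 by simp
    then have lu: "ln u > 0" using ulog by simp
    then have ug: "u > 1" using u1 by (simp add: ln_gt_zero_iff)
    have lW: "ln (real W + 1) \<ge> ln u" using Wu u1 by simp
    have lW0: "ln (real W + 1) > 0" using lW lu by linarith
    have G: "(\<Sum>T\<in>DW W. \<Prod>p\<in>T. 1 / (1 / gp p - 1)) \<ge> ln (real W + 1) / 12" by (rule G_lower[OF W1])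
    have Gpos: "ln (real W + 1) / 12 > 0" using lW0 by simp
    have mb: "N \<le> y / (\<Sum>T\<in>DW W. \<Prod>p\<in>T. 1 / (1 / gp p - 1)) + 4 * real W ^ 8"
      unfolding N_def by (rule main_bound[OF assms]) (use x1 y1 W1 in auto)
    have t1: "y / (\<Sum>T\<in>DW W. \<Prod>p\<in>T. 1 / (1 / gp p - 1)) \<le> y / (ln (real W + 1) / 12)"
    proof (rule divide_left_mono[OF G])
      show "0 \<le> y" using y1 by simp
      have Gs0: "(\<Sum>T\<in>DW W. \<Prod>p\<in>T. 1 / (1 / gp p - 1)) > 0" using G Gpos by linarith
      show "0 < (\<Sum>T\<in>DW W. \<Prod>p\<in>T. 1 / (1 / gp p - 1)) * (ln (real W + 1) / 12)"
        by (rule mult_pos_pos[OF Gs0 Gpos])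
    qed
    have t2: "y / (ln (real W + 1) / 12) \<le> y / (ln u / 12)"
      by (rule divide_left_mono) (use y1 lW lu ug lW0 in \<open>auto intro!: mult_pos_pos\<close>)
    have l2: "ln (y + 1) \<le> 20 * ln u"
    proof -
      have "3 * y \<le> y * y" using y3 by (intro mult_right_mono) auto
      then have "y + 1 \<le> y * y" using y3 by linarith
      then have "ln (y + 1) \<le> ln (y * y)" using y1 by simp
      also have "\<dots> = 2 * ln y" using y1 by (simp add: ln_mult)
      finally show ?thesis using ulog by simp
    qed
    have t3: "y / (ln u / 12) \<le> 240 * (y / ln (y + 1))"
    proof -
      have "y / (ln u / 12) = 12 * y / ln u" by simp
      also have "\<dots> \<le> 12 * y / (ln (y + 1) / 20)"
        by (rule divide_left_mono) (use y1 l2 lu ug lpos in \<open>auto intro!: mult_pos_pos\<close>)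
      also have "\<dots> = 240 * (y / ln (y + 1))" by simp
      finally show ?thesis .
    qed
    have t4: "4 * real W ^ 8 \<le> 80 * (y / ln (y + 1))"
    proof -
      have "real W ^ 8 \<le> u ^ 8" using Wu by (intro power_mono) auto
      have lnu: "ln u \<le> u - 1" using ln_le_minus_one[of u] u1 by simp
      have l3: "ln (y + 1) \<le> 20 * u" using l2 lnu by linarith
      have "u ^ 8 * ln (y + 1) \<le> u ^ 8 * (20 * u)" using l3 u1 by (intro mult_left_mono) auto
      also have "\<dots> = 20 * u ^ 9" by (simp add: eval_nat_numeral)
      also have "\<dots> \<le> 20 * u ^ 10" using u1 by (intro mult_left_mono power_increasing) auto
      finally have "u ^ 8 * ln (y + 1) \<le> 20 * y" unfolding yu .
      then have "u ^ 8 \<le> 20 * y / ln (y + 1)" using lpos by (simp add: field_simps)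
      then show ?thesis using \<open>real W ^ 8 \<le> u ^ 8\<close> by simp
    qed
    have "N \<le> 320 * (y / ln (y + 1))" using mb t1 t2 t3 t4 by linarith
    also have "\<dots> \<le> 400 * (y / ln (y + 1))" using y1 lpos by (intro mult_right_mono) auto
    finally show ?thesis unfolding QN .
  qed
qed simp


end
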